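(* Under Assumptions (A1) and (A2) of the context, let $B$ be the solution on $[0,T]$ of the constrained ODE and $\lambda^\ast,\pi^\ast$ as in the context. Then for all $t\in[0,T]$, $$\tfrac12\tfrac b{1-b}\eta^2-\tfrac12\tfrac b{1-b}\big(\lambda^\ast(B(T-t))+\sigma\rho B(T-t)\big)^2-\tfrac12b^2\rho^2\pi^\ast(t)^2+b\tfrac{\rho\kappa}\sigma\pi^\ast(t)+\tfrac b{1-b}\tfrac\rho\sigma\big[(\lambda^\ast)'(B(T-t))+\sigma\rho\big]B'(T-t)<\tfrac12\tfrac{\kappa^2}{\sigma^2}.$$
   Context: Parameters: $T>0$; $\eta,\kappa,\sigma>0$; $\rho\in(-1,1)$; $b<1$, $b\ne0$; $K=[\alpha,\beta]$, $-\infty\le\alpha<\beta\le\infty$; $\delta_K(x)=-\alpha x\mathbf 1_{\{x>0\}}-\beta x\mathbf 1_{\{x<0\}}$. $B_-=\frac{(1-b)\alpha-\eta}\sigma$, $B_+=\frac{(1-b)\beta-\eta}\sigma$; $r_0^-=\tfrac12 b\alpha((1-b)\alpha-2\eta)$, $r_1^-=b\sigma\rho\alpha-\kappa$, $r_2^-=\sigma^2$; $r_0=-\frac b{2(1-b)}\eta^2$, $r_1=\frac b{1-b}\eta\sigma\rho-\kappa$, $r_2=\sigma^2(1+\frac b{1-b}\rho^2)$; $r_0^+=\tfrac12 b\beta((1-b)\beta-2\eta)$, $r_1^+=b\sigma\rho\beta-\kappa$, $r_2^+=\sigma^2$. For a triple $(c_0,c_1,c_2)$: $c_3=\sqrt{c_1^2+2c_0c_2}$,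 $t_+(y_0)=\frac1{c_3}\ln\frac{c_1+c_2y_0+c_3}{c_1+c_2y_0-c_3}$ if $c_1+c_2y_0-c_3>0$, else $\infty$. (A1): (i) $\max\{\frac b{1-b}\eta(\frac{\kappa\rho}\sigma+\frac\eta2),\ b\alpha(\eta-\frac\alpha2+\frac{\kappa\rho}\sigma+\frac12\alpha b(1-\rho^2)),\ b\beta(\eta-\frac\beta2+\frac{\kappa\rho}\sigma+\frac12\beta b(1-\rho^2))\}<\frac{\kappa^2}{2\sigma^2}$; (ii) for each triple $(r_0^-,r_1^-,r_2^-),(r_0,r_1,r_2),(r_0^+,r_1^+,r_2^+)$ and each $y_0\in\{\frac{B_-}\rho\mathbf 1_{\{\rho\ne0\}},\frac{B_+}\rho\mathbf 1_{\{\rho\ne0\}},0\}$, $t_+(y_0)>T$. (A2): $\max\{\frac{b\rho}\kappa\alpha,\frac{b\rho}\kappa\beta\}\le\frac\kappa{\sigma^2}$. Constrained ODE: $B'(\tau)=-\kappa B+\frac12\sigma^2B^2+\frac12\frac b{1-b}\inf_{\lambda\in\mathbb R}(2(1-b)\delta_K(\lambda)+(\eta+\lambda+\sigma\rho B)^2)$, $B(0)=0$ (unique solution on $[0,T]$ under (A1)). $\lambda^\ast(B)=[(1-b)\alpha-(\eta+\sigma\rho B)]\mathbf 1_{\{\rho B<B_-\}}+[(1-b)\beta-(\eta+\sigma\rho B)]\mathbf 1_{\{\rho B>B_+\}}$, a piecewise affine function whose derivative $(\lambda^\ast)'(B)$ equals $-\sigma\rho$ when $\rho B<B_-$ or $\rho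 B>B_+$ and $0$ when $B_-<\rho B<B_+$ (at the kinks either one-sided value may be used). $\pi^\ast(t)=\frac1{1-b}(\eta+\lambda^\ast(B(T-t))+\sigma\rho B(T-t))$. *)

theory Defs
  imports "HOL-Analysis.Analysis" "HOL-Library.Extended_Real"
begin

text \<open>The constraint interval K = [al, be] has extended-real endpoints,
  -\<infinity> \<le> al < be \<le> \<infinity>.\<close>
definition deltaK :: "ereal \<Rightarrow> ereal \<Rightarrow> real \<Rightarrow> ereal" where
  "deltaK al be x = (if x > 0 then - al * ereal x else if x < 0 then - be * ereal x else 0)"

definition Bminus :: "real \<Rightarrow> real \<Rightarrow> real \<Rightarrow> ereal \<Rightarrow> ereal" where
  "Bminus b eta sig al = (ereal (1 - b) * al - ereal eta) / ereal sig"

definition Bplus :: "real \<Rightarrow> real \<Rightarrow> real \<Rightarrow> ereal \<Rightarrow> ereal" where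
  "Bplus b eta sig be = (ereal (1 - b) * be - ereal eta) / ereal sig"

definition tplus :: "real \<Rightarrow> real \<Rightarrow> real \<Rightarrow> real \<Rightarrow> ereal" where
  "tplus c0 c1 c2 y0 =
     (let c3 = sqrt (c1\<^sup>2 + 2 * c0 * c2) in
      if c1 + c2 * y0 - c3 > 0
      then ereal (1 / c3 * ln ((c1 + c2 * y0 + c3) / (c1 + c2 * y0 - c3)))
      else \<infinity>)"

definition ODErhs :: "real \<Rightarrow> real \<Rightarrow> real \<Rightarrow> real \<Rightarrow> real \<Rightarrow> ereal \<Rightarrow> ereal \<Rightarrow> real \<Rightarrow> real" where
  "ODErhs eta kappa sig rho b al be x =
     - kappa * x + 1/2 * sig\<^sup>2 * x\<^sup>2
     + 1/2 * (b / (1 - b)) *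
       real_of_ereal (INF lam\<in>(UNIV::real set).
          ereal (2 * (1 - b)) * deltaK al be lam + ereal ((eta + lam + sig * rho * x)\<^sup>2))"

definition lamstar :: "real \<Rightarrow> real \<Rightarrow> real \<Rightarrow> real \<Rightarrow> ereal \<Rightarrow> ereal \<Rightarrow> real \<Rightarrow> real" where
  "lamstar eta sig rho b al be x =
     (if ereal (rho * x) < Bminus b eta sig al
        then (1 - b) * real_of_ereal al - (eta + sig * rho * x) else 0)
   + (if ereal (rho * x) > Bplus b eta sig be
        then (1 - b) * real_of_ereal be - (eta + sig * rho * x) else 0)"

definition assumption_A1 :: "real \<Rightarrow> real \<Rightarrow> real \<Rightarrow> real \<Rightarrow> real \<Rightarrow> real \<Rightarrow> ereal \<Rightarrow> ereal \<Rightarrow> bool" where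
  "assumption_A1 T eta kappa sig rho b al be =
    (let r0 = - b / (2 * (1 - b)) * eta\<^sup>2;
         r1 = b / (1 - b) * eta * sig * rho - kappa;
         r2 = sig\<^sup>2 * (1 + b / (1 - b) * rho\<^sup>2);
         a = real_of_ereal al; c = real_of_ereal be;
         r0m = 1/2 * b * a * ((1 - b) * a - 2 * eta);
         r1m = b * sig * rho * a - kappa;
         r2m = sig\<^sup>2;
         r0p = 1/2 * b * c * ((1 - b) * c - 2 * eta);
         r1p = b * sig * rho * c - kappa;
         r2p = sig\<^sup>2;
         bound = kappa\<^sup>2 / (2 * sig\<^sup>2);
         Y = {0} \<union> (if \<bar>al\<bar> \<noteq> \<infinity> \<and> rho \<noteq> 0 then {real_of_ereal (Bminus b eta sig al) / rho} else {})
                 \<union> (if \<bar>be\<bar> \<noteq> \<infinity> \<and> rho \<noteq> 0 then {real_of_ereal (Bplus b eta sig be) / rho} else {});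
         Trip = {(r0, r1, r2)}
                 \<union> (if \<bar>al\<bar> \<noteq> \<infinity> then {(r0m, r1m, r2m)} else {})
                 \<union> (if \<bar>be\<bar> \<noteq> \<infinity> then {(r0p, r1p, r2p)} else {})
     in b / (1 - b) * eta * (kappa * rho / sig + eta / 2) < bound
      \<and> (\<bar>al\<bar> \<noteq> \<infinity> \<longrightarrow>
           b * a * (eta - a / 2 + kappa * rho / sig + 1/2 * a * b * (1 - rho\<^sup>2)) < bound)
      \<and> (\<bar>be\<bar> \<noteq> \<infinity> \<longrightarrow>
           b * c * (eta - c / 2 + kappa * rho / sig + 1/2 * c * b * (1 - rho\<^sup>2)) < bound)
      \<and> (\<forall>(c0, c1, c2)\<in>Trip. \<forall>y0\<in>Y. tplus c0 c1 c2 y0 > ereal T))"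

definition assumption_A2 :: "real \<Rightarrow> real \<Rightarrow> real \<Rightarrow> real \<Rightarrow> ereal \<Rightarrow> ereal \<Rightarrow> bool" where
  "assumption_A2 kappa sig rho b al be =
     ((\<bar>al\<bar> \<noteq> \<infinity> \<longrightarrow> b * rho / kappa * real_of_ereal al \<le> kappa / sig\<^sup>2)
    \<and> (\<bar>be\<bar> \<noteq> \<infinity> \<longrightarrow> b * rho / kappa * real_of_ereal be \<le> kappa / sig\<^sup>2))"

end

theory Submission
  imports Defs
begin

lemma Bminus_fin: "sig > 0 \<Longrightarrow> Bminus b eta sig (ereal a) = ereal (((1-b)*a-eta)/sig)"
  by (simp add: Bminus_def)
lemma Bplus_fin: "sig > 0 \<Longrightarrow> Bplus b eta sig (ereal a) = ereal (((1-b)*a-eta)/sig)"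
  by (simp add: Bplus_def)
lemma Bminus_minf: "sig > 0 \<Longrightarrow> b < 1 \<Longrightarrow> Bminus b eta sig (-\<infinity>) = -\<infinity>"
  by (simp add: Bminus_def)
lemma Bplus_inf: "sig > 0 \<Longrightarrow> b < 1 \<Longrightarrow> Bplus b eta sig (\<infinity>) = \<infinity>"
  by (simp add: Bplus_def)

lemma pt_lower:
  assumes b: "b < 1" and lo: "\<forall>a. al = ereal a \<longrightarrow> (1-b)*a \<le> eta + c"
    and hi: "\<forall>a. be = ereal a \<longrightarrow> eta + c \<le> (1-b)*a"
    and al: "al \<noteq> \<infinity>" and be: "be \<noteq> -\<infinity>"
  shows "ereal ((eta + c)\<^sup>2) \<le> ereal (2 * (1 - b)) * deltaK al be lam + ereal ((eta + lam + c)\<^sup>2)"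
proof (cases "lam > 0")
  case True
  show ?thesis
  proof (cases al)
    case (real a)
    with lo have "(1-b)*a \<le> eta + c" by auto
    hence "(eta + c)\<^sup>2 \<le> 2 * (1 - b) * (- a * lam) + (eta + lam + c)\<^sup>2"
    proof -
      have e: "(eta+lam+c)\<^sup>2 = (eta+c)\<^sup>2 + 2*lam*(eta+c) + lam\<^sup>2" by (simp add: power2_eq_square algebra_simps)
      have "lam*((1-b)*a) \<le> lam*(eta+c)" using True \<open>(1-b)*a \<le> eta + c\<close> by (intro mult_left_mono) auto
      moreover have "2*(1-b)*(-a*lam) = -2*(lam*((1-b)*a))" "2*lam*(eta+c) = 2*(lam*(eta+c))" by (simp_all add: algebra_simps)
      ultimately show ?thesis unfolding e using zero_le_power2[of lam] by linarith
    qed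
    then show ?thesis using True real by (simp add: deltaK_def)
  next
    case PInf with al show ?thesis by simp
  next
    case MInf
    then show ?thesis using True b by (simp add: deltaK_def)
  qed
next
  case False
  show ?thesis
  proof (cases "lam < 0")
    case True
    show ?thesis
    proof (cases be)
      case (real a)
      with hi have "eta + c \<le> (1-b)*a" by auto
      hence "(eta + c)\<^sup>2 \<le> 2 * (1 - b) * (- a * lam) + (eta + lam + c)\<^sup>2"
      proof -
        have e: "(eta+lam+c)\<^sup>2 = (eta+c)\<^sup>2 + 2*lam*(eta+c) + lam\<^sup>2" by (simp add: power2_eq_square algebra_simps)
        have "lam*((1-b)*a) \<le> lam*(eta+c)" using True \<open>eta + c \<le> (1-b)*a\<close> by (intro mult_left_mono_neg) auto
        moreover have "2*(1-b)*(-a*lam) = -2*(lam*((1-b)*a))" "2*lam*(eta+c) = 2*(lam*(eta+c))" by (simp_all add: algebra_simps)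
      ultimately show ?thesis unfolding e using zero_le_power2[of lam] by linarith
      qed
      then show ?thesis using True real by (simp add: deltaK_def)
    next
      case MInf with be show ?thesis by simp
    next
      case PInf
      then show ?thesis using True b by (simp add: deltaK_def)
    qed
  next
    case False2: False
    with False have "lam = 0" by simp
    then show ?thesis by (simp add: deltaK_def)
  qed
qed

lemma inf_mid:
  assumes b: "b < 1" and lo: "\<forall>a. al = ereal a \<longrightarrow> (1-b)*a \<le> eta + c"
    and hi: "\<forall>a. be = ereal a \<longrightarrow> eta + c \<le> (1-b)*a"
    and al: "al \<noteq> \<infinity>" and be: "be \<noteq> -\<infinity>"
  shows "(INF lam\<in>(UNIV::real set). ereal (2 * (1 - b)) * deltaK al be lam + ereal ((eta + lam + c)\<^sup>2))
    = ereal ((eta + c)\<^sup>2)"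
proof (rule antisym)
  show "(INF lam\<in>(UNIV::real set). ereal (2 * (1 - b)) * deltaK al be lam + ereal ((eta + lam + c)\<^sup>2))
    \<le> ereal ((eta + c)\<^sup>2)"
    by (rule INF_lower2[of 0]) (auto simp: deltaK_def)
  show "ereal ((eta + c)\<^sup>2) \<le> (INF lam\<in>(UNIV::real set). ereal (2 * (1 - b)) * deltaK al be lam + ereal ((eta + lam + c)\<^sup>2))"
    by (rule INF_greatest) (rule pt_lower[OF assms])
qed

lemma idO:
  fixes b ls c a eta rho kappa sig :: real
  assumes b: "b < 1" and s: "ls + c = (1-b)*a - eta"
  shows "1/2 * (b / (1 - b)) * eta\<^sup>2 - 1/2 * (b / (1 - b)) * (ls + c)\<^sup>2
        - 1/2 * b\<^sup>2 * rho\<^sup>2 * ((eta + ls + c) / (1 - b))\<^sup>2 + b * (rho * kappa / sig) * ((eta + ls + c) / (1 - b))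
     = b * a * (eta - a / 2 + kappa * rho / sig + 1/2 * a * b * (1 - rho\<^sup>2))"
proof -
  have l: "ls = (1-b)*a - eta - c" using s by simp
  define d where "d = 1 - b"
  have d: "d > 0" "b = 1 - d" using b by (auto simp: d_def)
  show ?thesis unfolding l d(2) using d(1) by (simp add: field_simps power2_eq_square)
qed

lemma idM:
  fixes b Bp x eta rho kappa sig :: real
  assumes b: "b < 1" and sig: "sig > 0"
    and Bp: "Bp = - kappa * x + 1/2 * sig\<^sup>2 * x\<^sup>2 + 1/2 * (b / (1 - b)) * (eta + sig*rho*x)\<^sup>2"
  shows "1/2 * (b / (1 - b)) * eta\<^sup>2 - 1/2 * (b / (1 - b)) * (0 + sig*rho*x)\<^sup>2
        - 1/2 * b\<^sup>2 * rho\<^sup>2 * ((eta + 0 + sig*rho*x) / (1 - b))\<^sup>2 + b * (rho * kappa / sig) * ((eta + 0 + sig*rho*x) / (1 - b))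
        + (b / (1 - b)) * (rho / sig) * (0 + sig * rho) * Bp
     = b / (1 - b) * eta * (kappa * rho / sig + eta / 2)"
proof -
  define d where "d = 1 - b"
  have d: "d > 0" "b = 1 - d" using b by (auto simp: d_def)
  show ?thesis unfolding Bp d_def[symmetric] using d(1) sig unfolding d(2) by (simp add: field_simps power2_eq_square)
qed

theorem lemma2p6:
  fixes T eta kappa sig rho b :: real
    and al be :: ereal
    and B B' dlam :: "real \<Rightarrow> real"
  assumes T: "T > 0"
    and pos: "eta > 0" "kappa > 0" "sig > 0"
    and rho: "-1 < rho" "rho < 1"
    and b: "b < 1" "b \<noteq> 0"
    and K: "al < be"
    and A1: "assumption_A1 T eta kappa sig rho b al be"
    and A2: "assumption_A2 kappa sig rho b al be"
    and B0: "B 0 = 0"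
    and Bderiv: "\<And>\<tau>. \<tau> \<in> {0..T} \<Longrightarrow> (B has_real_derivative B' \<tau>) (at \<tau> within {0..T})"
    and Bode: "\<And>\<tau>. \<tau> \<in> {0..T} \<Longrightarrow> B' \<tau> = ODErhs eta kappa sig rho b al be (B \<tau>)"
    and dlam_out: "\<And>x. ereal (rho * x) < Bminus b eta sig al \<or> ereal (rho * x) > Bplus b eta sig be
                     \<Longrightarrow> dlam x = - sig * rho"
    and dlam_in: "\<And>x. Bminus b eta sig al < ereal (rho * x) \<and> ereal (rho * x) < Bplus b eta sig be
                     \<Longrightarrow> dlam x = 0"
    and dlam_kink: "\<And>x. dlam x \<in> {- sig * rho, 0}"
  shows "\<forall>t\<in>{0..T}.
    (let Bt = B (T - t);
         ls = lamstar eta sig rho b al be Bt;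
         pis = (eta + ls + sig * rho * Bt) / (1 - b)
     in 1/2 * (b / (1 - b)) * eta\<^sup>2 - 1/2 * (b / (1 - b)) * (ls + sig * rho * Bt)\<^sup>2
        - 1/2 * b\<^sup>2 * rho\<^sup>2 * pis\<^sup>2 + b * (rho * kappa / sig) * pis
        + (b / (1 - b)) * (rho / sig) * (dlam Bt + sig * rho) * B' (T - t)
      < 1/2 * (kappa\<^sup>2 / sig\<^sup>2))"
proof
  fix t assume t: "t \<in> {0..T}"
  define x where "x = B (T - t)"
  define c where "c = sig * rho * x"
  define ls where "ls = lamstar eta sig rho b al be x"
  define Bp where "Bp = B' (T - t)"
  define bound where "bound = kappa\<^sup>2 / (2 * sig\<^sup>2)"
  have bnd: "1/2 * (kappa\<^sup>2 / sig\<^sup>2) = bound" by (simp add: bound_def)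
  have ode: "Bp = ODErhs eta kappa sig rho b al be x" using Bode[of "T - t"] t by (simp add: Bp_def x_def)
  have alI: "al \<noteq> \<infinity>" and beI: "be \<noteq> -\<infinity>" using K by auto
  have b1: "1 - b > 0" using b by simp
  note A1u = A1[unfolded assumption_A1_def Let_def]
  have A1a: "b / (1 - b) * eta * (kappa * rho / sig + eta / 2) < bound"
    using A1u by (simp add: bound_def)
  have A1m: "b * a * (eta - a / 2 + kappa * rho / sig + 1/2 * a * b * (1 - rho\<^sup>2)) < bound" if "al = ereal a" for a
    using A1u that by (simp add: bound_def)
  have A1p: "b * a * (eta - a / 2 + kappa * rho / sig + 1/2 * a * b * (1 - rho\<^sup>2)) < bound" if "be = ereal a" for a
    using A1u that by (simp add: bound_def)
  have BmBp: "Bminus b eta sig al < Bplus b eta sig be"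
  proof (cases al)
    case (real a)
    show ?thesis
    proof (cases be)
      case (real a')
      with \<open>al = ereal a\<close> K have "a < a'" by simp
      hence "((1-b)*a-eta)/sig < ((1-b)*a'-eta)/sig" using b1 pos(3)
        by (simp add: divide_strict_right_mono)
      then show ?thesis using real \<open>al = ereal a\<close> pos(3) by (simp add: Bminus_fin Bplus_fin)
    next
      case PInf then show ?thesis using real pos(3) b by (simp add: Bminus_fin Bplus_inf)
    next
      case MInf with beI show ?thesis by simp
    qed
  next
    case PInf with alI show ?thesis by simp
  next
    case MInf
    have "Bminus b eta sig al = -\<infinity>" using MInf pos(3) b by (simp add: Bminus_minf)
    moreover have "Bplus b eta sig be \<noteq> -\<infinity>"
      using beI pos(3) b by (cases be) (auto simp: Bplus_fin Bplus_inf)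
    ultimately show ?thesis by simp
  qed
  have main: "1/2 * (b / (1 - b)) * eta\<^sup>2 - 1/2 * (b / (1 - b)) * (ls + c)\<^sup>2
        - 1/2 * b\<^sup>2 * rho\<^sup>2 * ((eta + ls + c) / (1 - b))\<^sup>2 + b * (rho * kappa / sig) * ((eta + ls + c) / (1 - b))
        + (b / (1 - b)) * (rho / sig) * (dlam x + sig * rho) * Bp < bound"
  proof (cases "ereal (rho * x) < Bminus b eta sig al")
    case lo: True
    obtain a where a: "al = ereal a"
      using lo alI pos(3) b by (cases al) (auto simp: Bminus_minf)
    have nhi: "\<not> ereal (rho * x) > Bplus b eta sig be" using lo BmBp by simp
    have "ls = (1 - b) * a - (eta + c)" using lo nhi a by (simp add: ls_def lamstar_def c_def)
    hence s: "ls + c = (1-b)*a - eta" by simp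
    have dl: "dlam x + sig * rho = 0" using dlam_out[of x] lo by simp
    show ?thesis unfolding dl using idO[OF b(1) s, of rho kappa sig] A1m[OF a] by simp
  next
    case nlo: False
    show ?thesis
    proof (cases "ereal (rho * x) > Bplus b eta sig be")
      case hi: True
      obtain a where a: "be = ereal a"
        using hi beI pos(3) b by (cases be) (auto simp: Bplus_inf)
      have "ls = (1 - b) * a - (eta + c)" using nlo hi a by (simp add: ls_def lamstar_def c_def)
      hence s: "ls + c = (1-b)*a - eta" by simp
      have dl: "dlam x + sig * rho = 0" using dlam_out[of x] hi by simp
      show ?thesis unfolding dl using idO[OF b(1) s, of rho kappa sig] A1p[OF a] by simp
    next
      case nhi: False
      have ls0: "ls = 0" using nlo nhi by (simp add: ls_def lamstar_def)
      have lo': "(1-b)*a \<le> eta + c" if "al = ereal a" for a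
      proof -
        have "((1-b)*a-eta)/sig \<le> rho * x" using nlo that pos(3) by (simp add: Bminus_fin)
        hence "(1-b)*a-eta \<le> sig * (rho * x)" using pos(3) by (simp add: divide_le_eq mult.commute)
        thus ?thesis by (simp add: c_def)
      qed
      have hi': "eta + c \<le> (1-b)*a" if "be = ereal a" for a
      proof -
        have "rho * x \<le> ((1-b)*a-eta)/sig" using nhi that pos(3) by (simp add: Bplus_fin)
        hence "sig * (rho * x) \<le> (1-b)*a-eta" using pos(3) by (simp add: le_divide_eq mult.commute)
        thus ?thesis by (simp add: c_def)
      qed
      show ?thesis
      proof (cases "dlam x = 0")
        case True
        have inf: "(INF lam\<in>(UNIV::real set). ereal (2 * (1 - b)) * deltaK al be lam + ereal ((eta + lam + c)\<^sup>2))
            = ereal ((eta + c)\<^sup>2)"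
          using inf_mid[OF b(1) _ _ alI beI] lo' hi' by blast
        have Bp': "Bp = - kappa * x + 1/2 * sig\<^sup>2 * x\<^sup>2 + 1/2 * (b / (1 - b)) * (eta + sig*rho*x)\<^sup>2"
          using ode inf by (simp add: ODErhs_def c_def add.assoc)
        show ?thesis using idM[OF b(1) pos(3) Bp'] A1a True ls0 by (simp add: c_def)
      next
        case False
        hence dl: "dlam x + sig * rho = 0" using dlam_kink[of x] by auto
        show ?thesis
        proof (cases "rho = 0")
          case True
          then show ?thesis using A1a ls0 by (simp add: c_def dl field_simps power2_eq_square)
        next
          case rho0: False
          have "\<not> (Bminus b eta sig al < ereal (rho * x) \<and> ereal (rho * x) < Bplus b eta sig be)"
            using dlam_in[of x] False by auto
          hence "ereal (rho * x) = Bminus b eta sig al \<or> ereal (rho * x) = Bplus b eta sig be"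
            using nlo nhi by auto
          then show ?thesis
          proof
            assume e: "ereal (rho * x) = Bminus b eta sig al"
            obtain a where a: "al = ereal a"
              using e alI pos(3) b by (cases al) (auto simp: Bminus_minf)
            have "rho * x = ((1-b)*a-eta)/sig" using e a pos(3) by (simp add: Bminus_fin)
            hence "c = (1-b)*a-eta" using pos(3) by (simp add: c_def field_simps)
            hence s: "ls + c = (1-b)*a - eta" using ls0 by simp
            show ?thesis unfolding dl using idO[OF b(1) s, of rho kappa sig] A1m[OF a] by simp
          next
            assume e: "ereal (rho * x) = Bplus b eta sig be"
            obtain a where a: "be = ereal a"
              using e beI pos(3) b by (cases be) (auto simp: Bplus_inf)
            have "rho * x = ((1-b)*a-eta)/sig" using e a pos(3) by (simp add: Bplus_fin)
            hence "c = (1-b)*a-eta" using pos(3) by (simp add: c_def field_simps)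
            hence s: "ls + c = (1-b)*a - eta" using ls0 by simp
            show ?thesis unfolding dl using idO[OF b(1) s, of rho kappa sig] A1p[OF a] by simp
          qed
        qed
      qed
    qed
  qed
  show "let Bt = B (T - t);
         ls = lamstar eta sig rho b al be Bt;
         pis = (eta + ls + sig * rho * Bt) / (1 - b)
     in 1/2 * (b / (1 - b)) * eta\<^sup>2 - 1/2 * (b / (1 - b)) * (ls + sig * rho * Bt)\<^sup>2
        - 1/2 * b\<^sup>2 * rho\<^sup>2 * pis\<^sup>2 + b * (rho * kappa / sig) * pis
        + (b / (1 - b)) * (rho / sig) * (dlam Bt + sig * rho) * B' (T - t)
      < 1/2 * (kappa\<^sup>2 / sig\<^sup>2)"
    unfolding Let_def bnd using main by (simp add: x_def c_def ls_def Bp_def)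
qed

end
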